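(* Let $M(s,t)=C s^{-\alpha}(t-s)^{-\beta}$ with $C>0$, $\alpha,\beta\ge 0$ (a local factor). Let $t>0$ and let $\rho\in\mathcal B^-$ be a Bruno sequence with $\rho_n<1/2$ for all $n$. Put $s_n=t\hat\rho_n$. Then the sequence $\big(M(s_{n+1},s_n)\big)_{n\ge0}$ is bounded by a geometric sequence, i.e. there exist constants $K>0$ and $q>0$ with $M(s_{n+1},s_n)\le K q^n$ for all $n$.
   Context: A Bruno sequence is a strictly positive monotone real sequence $a=(a_n)_{n\ge0}$ such that $\sum_{k\ge0}|2^{-k}\log a_k|<+\infty$; its phase is $u_n=|2^{-n}\log a_n|$. $\mathcal B^-$ is the set of Bruno sequences of the form $a_n=e^{-2^nu_n}$, $u_n\ge0$. The Bruno transform of a sequence $a$ is the sequence $\hat a$ with terms $\hat a_n=a_0^{1/2}a_1^{1/2^2}\cdots a_n^{1/2^{n+1}}$; for a Bruno sequence it converges to a strictly positive number. *)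

theory Defs
  imports Complex_Main
begin

definition bruno_seq :: "(nat \<Rightarrow> real) \<Rightarrow> bool" where
  "bruno_seq a \<longleftrightarrow> (\<forall>n. a n > 0) \<and> (mono a \<or> antimono a) \<and>
     summable (\<lambda>k. \<bar>ln (a k) / 2 ^ k\<bar>)"

definition bruno_minus :: "(nat \<Rightarrow> real) set" where
  "bruno_minus = {a. bruno_seq a \<and>
     (\<exists>u. (\<forall>n. u n \<ge> 0) \<and> (\<forall>n. a n = exp (- (2 ^ n) * u n)))}"

definition bruno_transform :: "(nat \<Rightarrow> real) \<Rightarrow> nat \<Rightarrow> real" where
  "bruno_transform a n = (\<Prod>k\<le>n. a k powr (1 / 2 ^ (k + 1)))"

definition local_factor :: "real \<Rightarrow> real \<Rightarrow> real \<Rightarrow> real \<Rightarrow> real \<Rightarrow> real" where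
  "local_factor C \<alpha> \<beta> s t = C * s powr (- \<alpha>) * (t - s) powr (- \<beta>)"

end

theory Submission
  imports Defs
begin

theorem lemmaL:
  fixes C \<alpha> \<beta> t :: real and \<rho> :: "nat \<Rightarrow> real"
  assumes "C > 0" and "\<alpha> \<ge> 0" and "\<beta> \<ge> 0"
    and "t > 0"
    and "\<rho> \<in> bruno_minus"
    and "\<forall>n. \<rho> n < 1 / 2"
  shows "\<exists>K q. K > 0 \<and> q > 0 \<and>
    (\<forall>n. local_factor C \<alpha> \<beta> (t * bruno_transform \<rho> (Suc n)) (t * bruno_transform \<rho> n)
          \<le> K * q ^ n)"
proof -
  obtain u where u0: "\<And>n. u n \<ge> 0" and ru: "\<And>n. \<rho> n = exp (- (2 ^ n) * u n)"
    using assms(5) unfolding bruno_minus_def by blast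
  have bs: "summable (\<lambda>k. \<bar>ln (\<rho> k) / 2 ^ k\<bar>)"
    using assms(5) unfolding bruno_minus_def bruno_seq_def by blast
  have ueq: "\<bar>ln (\<rho> k) / 2 ^ k\<bar> = u k" for k
    using u0[of k] by (simp add: ru)
  have su: "summable u" using bs ueq by simp
  define S where "S = suminf u"
  have sumle: "(\<Sum>k\<le>n. u k) \<le> S" for n
    unfolding S_def using su u0 by (intro sum_le_suminf) auto
  have pw: "\<rho> k powr (1 / 2 ^ (k + 1)) = exp (- u k / 2)" for k
  proof -
    have "\<rho> k powr (1 / 2 ^ (k + 1)) = exp (1 / 2 ^ (k + 1) * ln (\<rho> k))"
      by (simp add: powr_def ru)
    also have "1 / 2 ^ (k + 1) * ln (\<rho> k) = - u k / 2"
      by (simp add: ru field_simps)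
    finally show ?thesis .
  qed
  have heq: "bruno_transform \<rho> n = exp (- (\<Sum>k\<le>n. u k) / 2)" for n
    unfolding bruno_transform_def pw
    by (simp add: exp_sum[symmetric] sum_negf sum_divide_distrib)
  define A where "A = exp (- S / 2)"
  have A0: "A > 0" unfolding A_def by simp
  have hA: "bruno_transform \<rho> n \<ge> A" for n
    unfolding heq A_def using sumle[of n] by simp
  have hsuc: "bruno_transform \<rho> (Suc n) = bruno_transform \<rho> n * exp (- u (Suc n) / 2)" for n
    unfolding heq by (simp add: exp_add[symmetric] field_simps)
  have ulow: "u n > ln 2 / 2 ^ n" for n
  proof -
    have "exp (- (2 ^ n) * u n) < 1/2" using assms(6) ru by metis
    hence "- (2 ^ n) * u n < ln (1/2)"
      by (metis exp_less_cancel_iff exp_ln_iff zero_less_divide_1_iff zero_less_numeral)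
    hence "(2 ^ n) * u n > ln 2" by (simp add: ln_div)
    thus ?thesis by (simp add: field_simps)
  qed
  define x0 :: "nat \<Rightarrow> real" where "x0 n = ln 2 / 2 ^ (n + 2)" for n
  have x0pos: "x0 n > 0" for n unfolding x0_def by simp
  have x0le1: "x0 n \<le> 1" for n
  proof -
    have "ln (2::real) \<le> 1" using ln_le_minus_one[of 2] by simp
    moreover have "(1::real) \<le> 2 ^ (n+2)" by (intro one_le_power) simp
    ultimately show ?thesis unfolding x0_def by (simp add: field_simps)
  qed
  have gap: "1 - exp (- u (Suc n) / 2) \<ge> x0 n / 2" for n
  proof -
    have "u (Suc n) / 2 > x0 n" using ulow[of "Suc n"] unfolding x0_def by (simp add: field_simps)
    hence "exp (- u (Suc n) / 2) \<le> exp (- x0 n)" by simp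
    moreover have "exp (x0 n) \<ge> 1 + x0 n" using exp_ge_add_one_self by simp
    hence "exp (- x0 n) \<le> 1 / (1 + x0 n)" using x0pos[of n]
      by (simp add: exp_minus field_simps)
    moreover have "1 / (1 + x0 n) \<le> 1 - x0 n / 2" using x0pos[of n] x0le1[of n]
      by (simp add: field_simps)
    ultimately show ?thesis by linarith
  qed
  define B where "B = A * ln 2 / 8"
  have B0: "B > 0" unfolding B_def using A0 by simp
  have diff: "bruno_transform \<rho> n - bruno_transform \<rho> (Suc n) \<ge> B * (1/2) ^ n" for n
  proof -
    have "bruno_transform \<rho> n - bruno_transform \<rho> (Suc n)
        = bruno_transform \<rho> n * (1 - exp (- u (Suc n) / 2))" by (simp add: hsuc algebra_simps)
    also have "\<dots> \<ge> A * (x0 n / 2)"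
      using hA[of n] gap[of n] A0 x0pos[of n] by (intro mult_mono) auto
    finally show ?thesis unfolding B_def x0_def by (simp add: field_simps power_add)
  qed
  define K where "K = C * (t * A) powr (- \<alpha>) * (t * B) powr (- \<beta>)"
  define q where "q = (1/2::real) powr (- \<beta>)"
  show ?thesis
  proof (intro exI conjI allI)
    show "K > 0" unfolding K_def using assms A0 B0 by simp
    show "q > 0" unfolding q_def by simp
    fix n
    have s1: "(t * bruno_transform \<rho> (Suc n)) powr (- \<alpha>) \<le> (t * A) powr (- \<alpha>)"
      using hA[of "Suc n"] A0 assms(2,4) by (intro powr_mono2') auto
    have d: "t * bruno_transform \<rho> n - t * bruno_transform \<rho> (Suc n) \<ge> t * B * (1/2)^n"
      using diff[of n] assms(4) by (simp add: right_diff_distrib[symmetric] mult.assoc)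
    have s2: "(t * bruno_transform \<rho> n - t * bruno_transform \<rho> (Suc n)) powr (- \<beta>)
        \<le> (t * B * (1/2)^n) powr (- \<beta>)"
      using d B0 assms(3,4) by (intro powr_mono2') auto
    have s3: "(t * B * (1/2)^n) powr (- \<beta>) = (t * B) powr (- \<beta>) * q ^ n"
    proof -
      have "((1/2::real)^n) powr (- \<beta>) = q ^ n"
        unfolding q_def by (simp add: powr_realpow[symmetric] powr_powr powr_power mult.commute)
      thus ?thesis using B0 assms(4) by (simp add: powr_mult)
    qed
    have "local_factor C \<alpha> \<beta> (t * bruno_transform \<rho> (Suc n)) (t * bruno_transform \<rho> n)
        = C * (t * bruno_transform \<rho> (Suc n)) powr (- \<alpha>)
           * (t * bruno_transform \<rho> n - t * bruno_transform \<rho> (Suc n)) powr (- \<beta>)"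
      unfolding local_factor_def by simp
    also have "\<dots> \<le> C * (t * A) powr (- \<alpha>) * ((t * B) powr (- \<beta>) * q ^ n)"
      using s1 s2 s3 assms(1) by (intro mult_mono) auto
    finally show "local_factor C \<alpha> \<beta> (t * bruno_transform \<rho> (Suc n)) (t * bruno_transform \<rho> n)
          \<le> K * q ^ n" unfolding K_def by (simp add: mult.assoc)
  qed
qed

end
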